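(* Let $\langle\mathcal{X},\mathsf{cap}\rangle$ be a $\textsf{VCh}$ instance with $\mathcal{X}=\langle\mathsf{S},\mathsf{po}\rangle$, and let $G_{\mathsf{frontier}}$ be its frontier graph. Then $\langle\mathcal{X},\mathsf{cap}\rangle$ is consistent if and only if some sink node of $G_{\mathsf{frontier}}$ is reachable from the source node.
   Context: Channels and events. Each channel $\mathtt{ch}$ has a capacity $\mathsf{cap}(\mathtt{ch})\in\mathbb{N}$; $\mathtt{ch}$ is synchronous if $\mathsf{cap}(\mathtt{ch})=0$ and asynchronous otherwise. An event is a tuple $e=\langle id,\tau,\mathsf{op}(\mathtt{ch},\mathsf{val})\rangle$ with a unique identifier $id$, a thread $\tau$, an operation $\mathsf{op}\in\{\mathtt{snd},\mathtt{rcv}\}$, a channel $\mathtt{ch}$ and a value $\mathsf{val}$. An execution is a finite sequence $\sigma$ of distinct events. $\sigma$ is well-formed (w.r.t. $\mathsf{cap}$) if: (i) for every asynchronous $\mathtt{ch}$ and every prefix $\pi$ of $\sigma$, $R_\pi(\mathtt{ch})\le S_\pi(\mathtt{ch})\le R_\pi(\mathtt{ch})+\mathsf{cap}(\mathtt{ch})$, where $S_\pi(\mathtt{ch})$, $R_\pi(\mathtt{ch})$ are the numbers of send, resp. receive, events on $\mathtt{ch}$ in $\pi$; (ii) for every synchronous $\mathtt{ch}$, every send on $\mathtt{ch}$ is immediately followed in $\sigma$ by a receive on $\mathtt{ch}$ of a different thread, and every receive on $\mathtt{ch}$ is immediately preceded in $\sigma$ by a send on $\mathtt{ch}$ of a different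 thread; (iii) for every channel $\mathtt{ch}$ and every $i$, if $\sigma$ contains an $i$-th receive on $\mathtt{ch}$, then the $i$-th send on $\mathtt{ch}$ has the same value as it. The program order $\mathsf{po}_\sigma$ is the set of pairs $(e,f)$ with $e$ before $f$ in $\sigma$ and in the same thread. An abstract execution is $\mathcal{X}=\langle \mathsf{S},\mathsf{po}\rangle$ where $\mathsf{S}$ is a finite set of events and $\mathsf{po}$ is a strict order that totally orders the events of each thread and relates no events of different threads. Given a capacity function $\mathsf{cap}$ on the channels occurring in $\mathsf{S}$, an execution $\sigma$ concretizes $\langle\mathcal{X},\mathsf{cap}\rangle$ if its set of events is $\mathsf{S}$, $\mathsf{po}_\sigma=\mathsf{po}$ and $\sigma$ is well-formed; $\langle\mathcal{X},\mathsf{cap}\rangle$ is consistent if it has a concretization. Frontier graph. For $Y\subseteq\mathsf{S}$ let $\#^{Y}_{\mathtt{snd}}(\mathtt{ch})$, $\#^{Y}_{\mathtt{rcv}}(\mathtt{ch})$ be the numbers of send, resp. receive, events on $\mathtt{ch}$ in $Y$. The nodes of $G_{\mathsf{frontier}}$ are triples $\langle Y,Q,I\rangle$ such that: (1) $Y\subseteq\mathsf{S}$ is downward closed under $\mathsf{po}$; for all synchronous channels $\mathtt{ch}$, $\#^{Y}_{\mathtt{rcv}}(\mathtt{ch})=\#^{Y}_{\mathtt{snd}}(\mathtt{ch})$ except for at most one synchronous channel, for which $\#^{Y}_{\mathtt{rcv}}(\mathtt{ch})=\#^{Y}_{\mathtt{snd}}(\mathtt{ch})-1$; and for every asynchronous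 $\mathtt{ch}$, $\#^{Y}_{\mathtt{rcv}}(\mathtt{ch})\le\#^{Y}_{\mathtt{snd}}(\mathtt{ch})\le\#^{Y}_{\mathtt{rcv}}(\mathtt{ch})+\mathsf{cap}(\mathtt{ch})$; (2) $Q$ maps each asynchronous channel $\mathtt{ch}$ to a sequence of events of $Y$ of length at most $\mathsf{cap}(\mathtt{ch})$, such that each event $e$ occurring in $Q(\mathtt{ch})$ is one of the last $|Q(\mathtt{ch})|$ send events on $\mathtt{ch}$ of the thread of $e$; (3) $I$ is $\bot$ if all synchronous channels satisfy $\#^{Y}_{\mathtt{rcv}}=\#^{Y}_{\mathtt{snd}}$, and otherwise $I$ is a send event on the (unique) synchronous channel $\mathtt{ch}$ with $\#^{Y}_{\mathtt{rcv}}(\mathtt{ch})=\#^{Y}_{\mathtt{snd}}(\mathtt{ch})-1$. The source node is $\langle\emptyset,\lambda\mathtt{ch}.\epsilon,\bot\rangle$; the sink nodes are all nodes of the form $\langle\mathsf{S},Q,\bot\rangle$. There is an edge $\langle Y_1,Q_1,I_1\rangle\to\langle Y_2,Q_2,I_2\rangle$ iff there is $e\in\mathsf{S}\setminus Y_1$ with $Y_2=Y_1\cup\{e\}$, and, letting $\mathtt{ch}$ be the channel of $e$: (a) if $\mathtt{ch}$ is asynchronous and $e$ is a receive: $I_1=I_2=\bot$, $Q_1(\mathtt{ch})$ is nonempty, its first event has the same value as $e$, $Q_1(\mathtt{ch})=f\cdot Q_2(\mathtt{ch})$ for that first event $f$, and $Q_2(\mathtt{ch}')=Q_1(\mathtt{ch}')$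 for all other asynchronous $\mathtt{ch}'$; (b) if $\mathtt{ch}$ is asynchronous and $e$ is a send: $I_1=I_2=\bot$, $|Q_1(\mathtt{ch})|<\mathsf{cap}(\mathtt{ch})$, $Q_2(\mathtt{ch})=Q_1(\mathtt{ch})\cdot e$, and $Q_2(\mathtt{ch}')=Q_1(\mathtt{ch}')$ for all other asynchronous $\mathtt{ch}'$; (c) if $\mathtt{ch}$ is synchronous and $e$ is a send: $I_1=\bot$, $I_2=e$, and $Q_1=Q_2$; (d) if $\mathtt{ch}$ is synchronous and $e$ is a receive: $I_1=e'\neq\bot$ where $e'$ is a send on $\mathtt{ch}$ with the same value as $e$ and a thread different from that of $e$, $I_2=\bot$, and $Q_1=Q_2$. *)

theory Defs
  imports Main
begin

datatype operation = Snd | Rcv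

datatype ('i, 't, 'c, 'v) event =
  Event (ev_id: 'i) (ev_thread: 't) (ev_op: operation) (ev_ch: 'c) (ev_val: 'v)

definition is_sync :: "('c \<Rightarrow> nat) \<Rightarrow> 'c \<Rightarrow> bool" where
  "is_sync cap ch \<longleftrightarrow> cap ch = 0"

definition is_async :: "('c \<Rightarrow> nat) \<Rightarrow> 'c \<Rightarrow> bool" where
  "is_async cap ch \<longleftrightarrow> cap ch > 0"

definition is_snd_on :: "'c \<Rightarrow> ('i, 't, 'c, 'v) event \<Rightarrow> bool" where
  "is_snd_on ch e \<longleftrightarrow> ev_op e = Snd \<and> ev_ch e = ch"

definition is_rcv_on :: "'c \<Rightarrow> ('i, 't, 'c, 'v) event \<Rightarrow> bool" where
  "is_rcv_on ch e \<longleftrightarrow> ev_op e = Rcv \<and> ev_ch e = ch"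

definition S_cnt :: "('i, 't, 'c, 'v) event list \<Rightarrow> 'c \<Rightarrow> nat" where
  "S_cnt \<pi> ch = length (filter (is_snd_on ch) \<pi>)"

definition R_cnt :: "('i, 't, 'c, 'v) event list \<Rightarrow> 'c \<Rightarrow> nat" where
  "R_cnt \<pi> ch = length (filter (is_rcv_on ch) \<pi>)"

definition well_formed :: "('c \<Rightarrow> nat) \<Rightarrow> ('i, 't, 'c, 'v) event list \<Rightarrow> bool" where
  "well_formed cap \<sigma> \<longleftrightarrow>
     \<comment> \<open>(i) asynchronous channels: buffer bounds on every prefix\<close>
     (\<forall>ch. is_async cap ch \<longrightarrow>
        (\<forall>k\<le>length \<sigma>. R_cnt (take k \<sigma>) ch \<le> S_cnt (take k \<sigma>) ch
                        \<and> S_cnt (take k \<sigma>) ch \<le> R_cnt (take k \<sigma>) ch + cap ch)) \<and>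
     \<comment> \<open>(ii) synchronous channels: sends immediately followed by a matching receive and vice versa\<close>
     (\<forall>ch. is_sync cap ch \<longrightarrow>
        (\<forall>i<length \<sigma>. is_snd_on ch (\<sigma> ! i) \<longrightarrow>
            Suc i < length \<sigma> \<and> is_rcv_on ch (\<sigma> ! Suc i)
            \<and> ev_thread (\<sigma> ! Suc i) \<noteq> ev_thread (\<sigma> ! i)) \<and>
        (\<forall>i<length \<sigma>. is_rcv_on ch (\<sigma> ! i) \<longrightarrow>
            0 < i \<and> is_snd_on ch (\<sigma> ! (i - 1))
            \<and> ev_thread (\<sigma> ! (i - 1)) \<noteq> ev_thread (\<sigma> ! i))) \<and>
     \<comment> \<open>(iii) the i-th receive on ch has the value of the i-th send on ch\<close>
     (\<forall>ch i. i < length (filter (is_rcv_on ch) \<sigma>) \<longrightarrow>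
        i < length (filter (is_snd_on ch) \<sigma>) \<and>
        ev_val (filter (is_snd_on ch) \<sigma> ! i) = ev_val (filter (is_rcv_on ch) \<sigma> ! i))"

definition po_of :: "('i, 't, 'c, 'v) event list \<Rightarrow> (('i, 't, 'c, 'v) event \<times> ('i, 't, 'c, 'v) event) set" where
  "po_of \<sigma> = {(\<sigma> ! i, \<sigma> ! j) | i j. i < j \<and> j < length \<sigma> \<and> ev_thread (\<sigma> ! i) = ev_thread (\<sigma> ! j)}"

definition abstract_execution ::
  "('i, 't, 'c, 'v) event set \<Rightarrow> (('i, 't, 'c, 'v) event \<times> ('i, 't, 'c, 'v) event) set \<Rightarrow> bool" where
  "abstract_execution S po \<longleftrightarrow>
     finite S \<and> inj_on ev_id S \<and>
     po \<subseteq> S \<times> S \<and> irrefl po \<and> trans po \<and>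
     (\<forall>e\<in>S. \<forall>f\<in>S. ev_thread e = ev_thread f \<and> e \<noteq> f \<longrightarrow> (e, f) \<in> po \<or> (f, e) \<in> po) \<and>
     (\<forall>(e, f)\<in>po. ev_thread e = ev_thread f)"

definition concretizes ::
  "('i, 't, 'c, 'v) event list \<Rightarrow> ('i, 't, 'c, 'v) event set
   \<Rightarrow> (('i, 't, 'c, 'v) event \<times> ('i, 't, 'c, 'v) event) set \<Rightarrow> ('c \<Rightarrow> nat) \<Rightarrow> bool" where
  "concretizes \<sigma> S po cap \<longleftrightarrow>
     distinct \<sigma> \<and> set \<sigma> = S \<and> po_of \<sigma> = po \<and> well_formed cap \<sigma>"

definition consistent ::
  "('i, 't, 'c, 'v) event set \<Rightarrow> (('i, 't, 'c, 'v) event \<times> ('i, 't, 'c, 'v) event) set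
   \<Rightarrow> ('c \<Rightarrow> nat) \<Rightarrow> bool" where
  "consistent S po cap \<longleftrightarrow> (\<exists>\<sigma>. concretizes \<sigma> S po cap)"

definition cnt_snd :: "('i, 't, 'c, 'v) event set \<Rightarrow> 'c \<Rightarrow> nat" where
  "cnt_snd Y ch = card {e\<in>Y. is_snd_on ch e}"

definition cnt_rcv :: "('i, 't, 'c, 'v) event set \<Rightarrow> 'c \<Rightarrow> nat" where
  "cnt_rcv Y ch = card {e\<in>Y. is_rcv_on ch e}"

type_synonym ('i, 't, 'c, 'v) fnode =
  "('i, 't, 'c, 'v) event set \<times> ('c \<Rightarrow> ('i, 't, 'c, 'v) event list) \<times> ('i, 't, 'c, 'v) event option"

definition among_last_sends ::
  "(('i, 't, 'c, 'v) event \<times> ('i, 't, 'c, 'v) event) set \<Rightarrow> ('i, 't, 'c, 'v) event set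
   \<Rightarrow> 'c \<Rightarrow> nat \<Rightarrow> ('i, 't, 'c, 'v) event \<Rightarrow> bool" where
  "among_last_sends po Y ch k e \<longleftrightarrow>
     e \<in> Y \<and> is_snd_on ch e \<and>
     card {f\<in>Y. is_snd_on ch f \<and> ev_thread f = ev_thread e \<and> (e, f) \<in> po} < k"

definition frontier_node ::
  "('i, 't, 'c, 'v) event set \<Rightarrow> (('i, 't, 'c, 'v) event \<times> ('i, 't, 'c, 'v) event) set
   \<Rightarrow> ('c \<Rightarrow> nat) \<Rightarrow> ('i, 't, 'c, 'v) fnode \<Rightarrow> bool" where
  "frontier_node S po cap N \<longleftrightarrow> (case N of (Y, Q, I) \<Rightarrow>
     \<comment> \<open>(1)\<close>
     Y \<subseteq> S \<and> (\<forall>f\<in>Y. \<forall>e. (e, f) \<in> po \<longrightarrow> e \<in> Y) \<and>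
     (\<forall>ch. is_sync cap ch \<longrightarrow>
        cnt_rcv Y ch = cnt_snd Y ch \<or> cnt_rcv Y ch + 1 = cnt_snd Y ch) \<and>
     (\<forall>ch1 ch2. is_sync cap ch1 \<and> is_sync cap ch2 \<and>
        cnt_rcv Y ch1 + 1 = cnt_snd Y ch1 \<and> cnt_rcv Y ch2 + 1 = cnt_snd Y ch2 \<longrightarrow> ch1 = ch2) \<and>
     (\<forall>ch. is_async cap ch \<longrightarrow>
        cnt_rcv Y ch \<le> cnt_snd Y ch \<and> cnt_snd Y ch \<le> cnt_rcv Y ch + cap ch) \<and>
     \<comment> \<open>(2) Q is only defined (non-empty) on asynchronous channels\<close>
     (\<forall>ch. is_sync cap ch \<longrightarrow> Q ch = []) \<and>
     (\<forall>ch. is_async cap ch \<longrightarrow>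
        length (Q ch) \<le> cap ch \<and>
        (\<forall>e\<in>set (Q ch). among_last_sends po Y ch (length (Q ch)) e)) \<and>
     \<comment> \<open>(3)\<close>
     (if (\<forall>ch. is_sync cap ch \<longrightarrow> cnt_rcv Y ch = cnt_snd Y ch)
      then I = None
      else (\<exists>e ch. I = Some e \<and> e \<in> S \<and> is_sync cap ch \<and> is_snd_on ch e
                  \<and> cnt_rcv Y ch + 1 = cnt_snd Y ch)))"

definition frontier_edge ::
  "('i, 't, 'c, 'v) event set \<Rightarrow> (('i, 't, 'c, 'v) event \<times> ('i, 't, 'c, 'v) event) set
   \<Rightarrow> ('c \<Rightarrow> nat) \<Rightarrow> ('i, 't, 'c, 'v) fnode \<Rightarrow> ('i, 't, 'c, 'v) fnode \<Rightarrow> bool" where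
  "frontier_edge S po cap N1 N2 \<longleftrightarrow>
     frontier_node S po cap N1 \<and> frontier_node S po cap N2 \<and>
     (case N1 of (Y1, Q1, I1) \<Rightarrow> case N2 of (Y2, Q2, I2) \<Rightarrow>
       (\<exists>e\<in>S - Y1. Y2 = insert e Y1 \<and>
         (let ch = ev_ch e in
          \<comment> \<open>(a) asynchronous receive\<close>
          (is_async cap ch \<and> ev_op e = Rcv \<and> I1 = None \<and> I2 = None \<and>
             Q1 ch \<noteq> [] \<and> ev_val (hd (Q1 ch)) = ev_val e \<and> Q1 ch = hd (Q1 ch) # Q2 ch \<and>
             (\<forall>ch'. is_async cap ch' \<and> ch' \<noteq> ch \<longrightarrow> Q2 ch' = Q1 ch')) \<or>
          \<comment> \<open>(b) asynchronous send\<close>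
          (is_async cap ch \<and> ev_op e = Snd \<and> I1 = None \<and> I2 = None \<and>
             length (Q1 ch) < cap ch \<and> Q2 ch = Q1 ch @ [e] \<and>
             (\<forall>ch'. is_async cap ch' \<and> ch' \<noteq> ch \<longrightarrow> Q2 ch' = Q1 ch')) \<or>
          \<comment> \<open>(c) synchronous send\<close>
          (is_sync cap ch \<and> ev_op e = Snd \<and> I1 = None \<and> I2 = Some e \<and> Q1 = Q2) \<or>
          \<comment> \<open>(d) synchronous receive\<close>
          (is_sync cap ch \<and> ev_op e = Rcv \<and>
             (\<exists>e'. I1 = Some e' \<and> is_snd_on ch e' \<and> ev_val e' = ev_val e
                    \<and> ev_thread e' \<noteq> ev_thread e) \<and>
             I2 = None \<and> Q1 = Q2))))"

definition frontier_source :: "('i, 't, 'c, 'v) fnode" where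
  "frontier_source = ({}, (\<lambda>ch. []), None)"

definition frontier_sink ::
  "('i, 't, 'c, 'v) event set \<Rightarrow> (('i, 't, 'c, 'v) event \<times> ('i, 't, 'c, 'v) event) set
   \<Rightarrow> ('c \<Rightarrow> nat) \<Rightarrow> ('i, 't, 'c, 'v) fnode \<Rightarrow> bool" where
  "frontier_sink S po cap N \<longleftrightarrow> frontier_node S po cap N \<and> fst N = S \<and> snd (snd N) = None"

end

theory Submission
  imports Defs
begin

lemma async_iff: "is_async cap ch \<longleftrightarrow> \<not> is_sync cap ch"
  by (auto simp: is_async_def is_sync_def)

definition I_of :: "('c \<Rightarrow> nat) \<Rightarrow> ('i,'t,'c,'v) event list \<Rightarrow> ('i,'t,'c,'v) event option" where
  "I_of cap \<tau> = (if \<tau> \<noteq> [] \<and> is_sync cap (ev_ch (last \<tau>)) \<and> ev_op (last \<tau>) = Snd then Some (last \<tau>) else None)"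

definition Q_of :: "('c \<Rightarrow> nat) \<Rightarrow> ('i,'t,'c,'v) event list \<Rightarrow> 'c \<Rightarrow> ('i,'t,'c,'v) event list" where
  "Q_of cap \<tau> = (\<lambda>ch. if is_async cap ch then drop (R_cnt \<tau> ch) (filter (is_snd_on ch) \<tau>) else [])"

definition node_of :: "('c \<Rightarrow> nat) \<Rightarrow> ('i,'t,'c,'v) event list \<Rightarrow> ('i,'t,'c,'v) fnode" where
  "node_of cap \<tau> = (set \<tau>, Q_of cap \<tau>, I_of cap \<tau>)"

definition Lstep :: "('c \<Rightarrow> nat) \<Rightarrow> ('i,'t,'c,'v) event list \<Rightarrow> ('i,'t,'c,'v) event \<Rightarrow> bool" where
  "Lstep cap \<tau> e = (let ch = ev_ch e in
     (is_async cap ch \<and> ev_op e = Rcv \<and> I_of cap \<tau> = None \<and> R_cnt \<tau> ch < S_cnt \<tau> ch \<and>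
        ev_val (filter (is_snd_on ch) \<tau> ! R_cnt \<tau> ch) = ev_val e) \<or>
     (is_async cap ch \<and> ev_op e = Snd \<and> I_of cap \<tau> = None \<and> S_cnt \<tau> ch < R_cnt \<tau> ch + cap ch) \<or>
     (is_sync cap ch \<and> ev_op e = Snd \<and> I_of cap \<tau> = None) \<or>
     (is_sync cap ch \<and> ev_op e = Rcv \<and> (\<exists>e'. I_of cap \<tau> = Some e' \<and> is_snd_on ch e' \<and>
         ev_val e' = ev_val e \<and> ev_thread e' \<noteq> ev_thread e)))"

definition Pgood :: "('c \<Rightarrow> nat) \<Rightarrow> ('i,'t,'c,'v) event list \<Rightarrow> bool" where
  "Pgood cap \<sigma> = (\<forall>k<length \<sigma>. Lstep cap (take k \<sigma>) (\<sigma> ! k))"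

lemma S_cnt_snoc: "S_cnt (\<tau> @ [e]) ch = S_cnt \<tau> ch + (if is_snd_on ch e then 1 else 0)"
  by (simp add: S_cnt_def)
lemma R_cnt_snoc: "R_cnt (\<tau> @ [e]) ch = R_cnt \<tau> ch + (if is_rcv_on ch e then 1 else 0)"
  by (simp add: R_cnt_def)

lemma I_of_snoc: "I_of cap (\<tau> @ [e]) = (if is_sync cap (ev_ch e) \<and> ev_op e = Snd then Some e else None)"
  by (simp add: I_of_def)

lemma Pgood_Nil[simp]: "Pgood cap []" by (simp add: Pgood_def)

lemma Pgood_snoc: "Pgood cap (\<tau> @ [e]) \<longleftrightarrow> Pgood cap \<tau> \<and> Lstep cap \<tau> e"
  unfolding Pgood_def
  by (auto simp: nth_append less_Suc_eq)

lemma Pgood_take: "Pgood cap \<sigma> \<Longrightarrow> Pgood cap (take k \<sigma>)"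
  unfolding Pgood_def by (auto simp: min_def)

lemma Inv:
  assumes "Pgood cap \<tau>"
  shows "(\<forall>ch. is_async cap ch \<longrightarrow> R_cnt \<tau> ch \<le> S_cnt \<tau> ch \<and> S_cnt \<tau> ch \<le> R_cnt \<tau> ch + cap ch) \<and>
         (\<forall>ch. is_sync cap ch \<longrightarrow> S_cnt \<tau> ch = R_cnt \<tau> ch + (if \<exists>e'. I_of cap \<tau> = Some e' \<and> ev_ch e' = ch then 1 else 0))"
  using assms
proof (induction \<tau> rule: rev_induct)
  case Nil
  then show ?case by (simp add: S_cnt_def R_cnt_def I_of_def)
next
  case (snoc e \<tau>)
  then have IH: "(\<forall>ch. is_async cap ch \<longrightarrow> R_cnt \<tau> ch \<le> S_cnt \<tau> ch \<and> S_cnt \<tau> ch \<le> R_cnt \<tau> ch + cap ch) \<and>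
         (\<forall>ch. is_sync cap ch \<longrightarrow> S_cnt \<tau> ch = R_cnt \<tau> ch + (if \<exists>e'. I_of cap \<tau> = Some e' \<and> ev_ch e' = ch then 1 else 0))"
    and L: "Lstep cap \<tau> e" by (auto simp: Pgood_snoc)
  show ?case
    using L IH unfolding Lstep_def Let_def
    apply (simp only: S_cnt_snoc R_cnt_snoc I_of_snoc)
    apply (elim disjE conjE exE)
    apply (auto simp: is_snd_on_def is_rcv_on_def async_iff)
    done
qed

lemma I_of_take_Suc:
  "i < length \<sigma> \<Longrightarrow> I_of cap (take (Suc i) \<sigma>) =
     (if is_sync cap (ev_ch (\<sigma>!i)) \<and> ev_op (\<sigma>!i) = Snd then Some (\<sigma>!i) else None)"
  by (simp add: take_Suc_conv_app_nth I_of_snoc)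

lemma filter_take_nth:
  assumes "k < length \<sigma>" "P (\<sigma>!k)"
  shows "filter P \<sigma> ! length (filter P (take k \<sigma>)) = \<sigma>!k"
proof -
  have "\<sigma> = take k \<sigma> @ \<sigma>!k # drop (Suc k) \<sigma>" using assms(1) by (simp add: id_take_nth_drop)
  then have "filter P \<sigma> = filter P (take k \<sigma>) @ \<sigma>!k # filter P (drop (Suc k) \<sigma>)"
    using assms(2) by (metis filter.simps(2) filter_append)
  then show ?thesis by (simp add: nth_append)
qed

lemma filter_take_nth2:
  assumes "i < length (filter P (take k \<sigma>))"
  shows "filter P \<sigma> ! i = filter P (take k \<sigma>) ! i"
proof -
  have "filter P \<sigma> = filter P (take k \<sigma>) @ filter P (drop k \<sigma>)"
    by (metis append_take_drop_id filter_append)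
  then show ?thesis using assms by (simp add: nth_append)
qed

lemma vals:
  assumes "Pgood cap \<sigma>"
  shows "\<forall>ch i. i < length (filter (is_rcv_on ch) \<sigma>) \<longrightarrow>
        i < length (filter (is_snd_on ch) \<sigma>) \<and>
        ev_val (filter (is_snd_on ch) \<sigma> ! i) = ev_val (filter (is_rcv_on ch) \<sigma> ! i)"
  using assms
proof (induction \<sigma> rule: rev_induct)
  case Nil
  then show ?case by simp
next
  case (snoc e \<tau>)
  then have IH: "\<forall>ch i. i < length (filter (is_rcv_on ch) \<tau>) \<longrightarrow>
        i < length (filter (is_snd_on ch) \<tau>) \<and>
        ev_val (filter (is_snd_on ch) \<tau> ! i) = ev_val (filter (is_rcv_on ch) \<tau> ! i)"
    and L: "Lstep cap \<tau> e" and P: "Pgood cap \<tau>" by (auto simp: Pgood_snoc)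
  note inv = Inv[OF P]
  show ?case
  proof (intro allI impI)
    fix ch i
    assume i: "i < length (filter (is_rcv_on ch) (\<tau> @ [e]))"
    show "i < length (filter (is_snd_on ch) (\<tau> @ [e])) \<and>
        ev_val (filter (is_snd_on ch) (\<tau> @ [e]) ! i) = ev_val (filter (is_rcv_on ch) (\<tau> @ [e]) ! i)"
    proof (cases "i < length (filter (is_rcv_on ch) \<tau>)")
      case True
      then have "i < length (filter (is_snd_on ch) \<tau>) \<and>
        ev_val (filter (is_snd_on ch) \<tau> ! i) = ev_val (filter (is_rcv_on ch) \<tau> ! i)" using IH by blast
      then show ?thesis using True by (auto simp: nth_append)
    next
      case False
      then have rc: "is_rcv_on ch e" and ieq: "i = R_cnt \<tau> ch" using i
        by (auto simp: R_cnt_def split: if_splits)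
      then have nsnd: "\<not> is_snd_on ch e" by (auto simp: is_rcv_on_def is_snd_on_def)
      have rhs: "filter (is_rcv_on ch) (\<tau> @ [e]) ! i = e" using ieq rc by (simp add: R_cnt_def)
      have che: "ev_ch e = ch" "ev_op e = Rcv" using rc by (auto simp: is_rcv_on_def)
      have key: "R_cnt \<tau> ch < S_cnt \<tau> ch \<and> ev_val (filter (is_snd_on ch) \<tau> ! R_cnt \<tau> ch) = ev_val e"
      proof (cases "is_async cap ch")
        case True
        then show ?thesis using L che unfolding Lstep_def Let_def by (auto simp: async_iff)
      next
        case False
        then have sy: "is_sync cap ch" by (simp add: async_iff)
        then obtain e' where e': "I_of cap \<tau> = Some e'" "is_snd_on ch e'" "ev_val e' = ev_val e"
          using L che unfolding Lstep_def Let_def by (auto simp: async_iff)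
        have ne: "\<tau> \<noteq> []" and le: "last \<tau> = e'" using e'(1) by (auto simp: I_of_def split: if_splits)
        have cnt: "S_cnt \<tau> ch = R_cnt \<tau> ch + 1" using inv sy e' by (auto simp: is_snd_on_def)
        obtain \<tau>' where t': "\<tau> = \<tau>' @ [e']" using ne le by (metis append_butlast_last_id)
        have "filter (is_snd_on ch) \<tau> = filter (is_snd_on ch) \<tau>' @ [e']" using t' e'(2) by simp
        moreover have "length (filter (is_snd_on ch) \<tau>') = R_cnt \<tau> ch"
          using cnt t' e'(2) by (simp add: S_cnt_def)
        ultimately show ?thesis using cnt e'(3) by (simp add: nth_append)
      qed
      show ?thesis using key nsnd rhs ieq by (simp add: S_cnt_def nth_append)
    qed
  qed
qed

lemma WF1:
  assumes P: "Pgood cap \<sigma>" and I: "I_of cap \<sigma> = None"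
  shows "well_formed cap \<sigma>"
  unfolding well_formed_def
proof (intro conjI allI impI)
  fix ch k assume "is_async cap ch" "k \<le> length \<sigma>"
  then show "R_cnt (take k \<sigma>) ch \<le> S_cnt (take k \<sigma>) ch" "S_cnt (take k \<sigma>) ch \<le> R_cnt (take k \<sigma>) ch + cap ch"
    using Inv[OF Pgood_take[OF P]] by auto
next
  fix ch i assume sy: "is_sync cap ch" and i: "i < length \<sigma>" and sn: "is_snd_on ch (\<sigma> ! i)"
  have Ii: "I_of cap (take (Suc i) \<sigma>) = Some (\<sigma>!i)"
    using I_of_take_Suc[OF i] sy sn by (auto simp: is_snd_on_def)
  show si: "Suc i < length \<sigma>"
  proof (rule ccontr)
    assume "\<not> Suc i < length \<sigma>"
    then have "take (Suc i) \<sigma> = \<sigma>" using i by simp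
    then show False using I Ii by simp
  qed
  have "Lstep cap (take (Suc i) \<sigma>) (\<sigma> ! Suc i)" using P si unfolding Pgood_def by blast
  then have "is_sync cap (ev_ch (\<sigma> ! Suc i)) \<and> ev_op (\<sigma> ! Suc i) = Rcv \<and> is_snd_on (ev_ch (\<sigma> ! Suc i)) (\<sigma>!i)
     \<and> ev_thread (\<sigma>!i) \<noteq> ev_thread (\<sigma> ! Suc i)"
    unfolding Lstep_def Let_def using Ii by auto
  then show "is_rcv_on ch (\<sigma> ! Suc i)" "ev_thread (\<sigma> ! Suc i) \<noteq> ev_thread (\<sigma> ! i)"
    using sn by (auto simp: is_rcv_on_def is_snd_on_def)
next
  fix ch i assume sy: "is_sync cap ch" and i: "i < length \<sigma>" and rc: "is_rcv_on ch (\<sigma> ! i)"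
  have "Lstep cap (take i \<sigma>) (\<sigma> ! i)" using P i unfolding Pgood_def by blast
  then obtain e' where e': "I_of cap (take i \<sigma>) = Some e'" "is_snd_on ch e'" "ev_thread e' \<noteq> ev_thread (\<sigma>!i)"
    unfolding Lstep_def Let_def using sy rc by (auto simp: is_rcv_on_def async_iff)
  then have ne: "take i \<sigma> \<noteq> []" and le: "last (take i \<sigma>) = e'" by (auto simp: I_of_def split: if_splits)
  then have ip: "0 < i" by (cases i) auto
  have "last (take i \<sigma>) = \<sigma> ! (i - 1)" using ip i by (cases i) (auto simp: take_Suc_conv_app_nth)
  then show "0 < i" "is_snd_on ch (\<sigma> ! (i - 1))" "ev_thread (\<sigma> ! (i - 1)) \<noteq> ev_thread (\<sigma> ! i)"
    using ip le e' by auto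
next
  show "\<And>ch i. i < length (filter (is_rcv_on ch) \<sigma>) \<Longrightarrow> i < length (filter (is_snd_on ch) \<sigma>)"
    "\<And>ch i. i < length (filter (is_rcv_on ch) \<sigma>) \<Longrightarrow> ev_val (filter (is_snd_on ch) \<sigma> ! i) = ev_val (filter (is_rcv_on ch) \<sigma> ! i)"
    using vals[OF P] by auto
qed

lemma filter_take_len:
  assumes "k < length \<sigma>" "P (\<sigma>!k)"
  shows "length (filter P (take k \<sigma>)) < length (filter P \<sigma>)"
proof -
  have "\<sigma> = take k \<sigma> @ \<sigma>!k # drop (Suc k) \<sigma>" using assms(1) by (simp add: id_take_nth_drop)
  then have "filter P \<sigma> = filter P (take k \<sigma>) @ \<sigma>!k # filter P (drop (Suc k) \<sigma>)"
    using assms(2) by (metis filter.simps(2) filter_append)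
  then show ?thesis by simp
qed

lemma I_of_take:
  "k \<le> length \<sigma> \<Longrightarrow> I_of cap (take k \<sigma>) =
     (if 0 < k \<and> is_sync cap (ev_ch (\<sigma>!(k-1))) \<and> ev_op (\<sigma>!(k-1)) = Snd then Some (\<sigma>!(k-1)) else None)"
  by (cases k) (auto simp: I_of_take_Suc, simp add: I_of_def)

lemma wf_after_sync:
  assumes wf: "well_formed cap \<sigma>" and k: "k < length \<sigma>" and I: "I_of cap (take k \<sigma>) = Some e'"
  shows "0 < k \<and> e' = \<sigma>!(k-1) \<and> is_sync cap (ev_ch e') \<and> is_snd_on (ev_ch e') e' \<and>
         is_rcv_on (ev_ch e') (\<sigma>!k) \<and> ev_thread (\<sigma>!k) \<noteq> ev_thread e'"
proof -
  have h: "0 < k" "e' = \<sigma>!(k-1)" "is_sync cap (ev_ch e')" "ev_op e' = Snd"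
    using I I_of_take[of k \<sigma> cap] k by (auto split: if_splits)
  then have sn: "is_snd_on (ev_ch e') (\<sigma>!(k-1))" by (simp add: is_snd_on_def)
  have k1: "k - 1 < length \<sigma>" "Suc (k-1) = k" using h k by auto
  have wfs: "\<forall>ch. is_sync cap ch \<longrightarrow>
        (\<forall>i<length \<sigma>. is_snd_on ch (\<sigma> ! i) \<longrightarrow>
            Suc i < length \<sigma> \<and> is_rcv_on ch (\<sigma> ! Suc i)
            \<and> ev_thread (\<sigma> ! Suc i) \<noteq> ev_thread (\<sigma> ! i))"
    using wf unfolding well_formed_def by blast
  have "is_rcv_on (ev_ch e') (\<sigma> ! Suc (k-1)) \<and> ev_thread (\<sigma> ! Suc (k-1)) \<noteq> ev_thread (\<sigma> ! (k-1))"
    using wfs h(3) k1(1) sn by blast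
  then show ?thesis using h sn k1 by simp
qed

lemma WF2_I:
  assumes wf: "well_formed cap \<sigma>"
  shows "I_of cap \<sigma> = None"
proof (rule ccontr)
  assume "I_of cap \<sigma> \<noteq> None"
  then obtain e' where e': "I_of cap \<sigma> = Some e'" by auto
  then have ne: "\<sigma> \<noteq> []" "e' = last \<sigma>" "is_sync cap (ev_ch e')" "ev_op e' = Snd"
    by (auto simp: I_of_def split: if_splits)
  let ?i = "length \<sigma> - 1"
  have i: "?i < length \<sigma>" "\<sigma> ! ?i = e'" using ne by (auto simp: last_conv_nth)
  have wfs: "\<forall>ch. is_sync cap ch \<longrightarrow>
        (\<forall>i<length \<sigma>. is_snd_on ch (\<sigma> ! i) \<longrightarrow> Suc i < length \<sigma>)"
    using wf unfolding well_formed_def by blast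
  have "is_snd_on (ev_ch e') (\<sigma> ! ?i)" using ne i by (simp add: is_snd_on_def)
  then have "Suc ?i < length \<sigma>" using wfs ne(3) i(1) by blast
  then show False by simp
qed

lemma WF2_P:
  assumes wf: "well_formed cap \<sigma>"
  shows "k \<le> length \<sigma> \<Longrightarrow> Pgood cap (take k \<sigma>)"
proof (induction k)
  case 0
  then show ?case by simp
next
  case (Suc k)
  then have k: "k < length \<sigma>" and P: "Pgood cap (take k \<sigma>)" by auto
  define \<tau> where "\<tau> = take k \<sigma>"
  define e where "e = \<sigma>!k"
  define ch where "ch = ev_ch e"
  have te: "take (Suc k) \<sigma> = \<tau> @ [e]" using k by (simp add: \<tau>_def e_def take_Suc_conv_app_nth)
  have wfi: "\<forall>ch. is_async cap ch \<longrightarrow>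
        (\<forall>k\<le>length \<sigma>. R_cnt (take k \<sigma>) ch \<le> S_cnt (take k \<sigma>) ch
                        \<and> S_cnt (take k \<sigma>) ch \<le> R_cnt (take k \<sigma>) ch + cap ch)"
    and wfiii: "\<forall>ch i. i < length (filter (is_rcv_on ch) \<sigma>) \<longrightarrow>
        i < length (filter (is_snd_on ch) \<sigma>) \<and>
        ev_val (filter (is_snd_on ch) \<sigma> ! i) = ev_val (filter (is_rcv_on ch) \<sigma> ! i)"
    using wf unfolding well_formed_def by blast+
  have Inone: "I_of cap \<tau> = None" if "\<not> (is_sync cap ch \<and> ev_op e = Rcv)"
  proof (rule ccontr)
    assume "I_of cap \<tau> \<noteq> None"
    then obtain e' where "I_of cap \<tau> = Some e'" by auto
    from wf_after_sync[OF wf k this[unfolded \<tau>_def]] that show False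
      by (auto simp: ch_def e_def is_rcv_on_def)
  qed
  have bnd: "R_cnt (\<tau>@[e]) ch \<le> S_cnt (\<tau>@[e]) ch \<and> S_cnt (\<tau>@[e]) ch \<le> R_cnt (\<tau>@[e]) ch + cap ch"
    if "is_async cap ch" using wfi that Suc.prems unfolding te[symmetric] by blast
  have rcvnth: "filter (is_rcv_on ch) \<sigma> ! R_cnt \<tau> ch = e"
    "R_cnt \<tau> ch < length (filter (is_rcv_on ch) \<sigma>)" if "ev_op e = Rcv"
    using filter_take_nth[OF k, of "is_rcv_on ch"] filter_take_len[OF k, of "is_rcv_on ch"] that
    by (auto simp: R_cnt_def \<tau>_def e_def ch_def is_rcv_on_def)
  have L: "Lstep cap \<tau> e"
  proof (cases "is_async cap ch")
    case as: True
    then have Inn: "I_of cap \<tau> = None" using Inone by (simp add: async_iff)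
    show ?thesis
    proof (cases "ev_op e")
      case Snd
      then show ?thesis using bnd[OF as] Inn as
        by (auto simp: Lstep_def Let_def ch_def[symmetric] S_cnt_snoc R_cnt_snoc is_snd_on_def is_rcv_on_def)
    next
      case Rcv
      have lt: "R_cnt \<tau> ch < S_cnt \<tau> ch" using bnd[OF as] Rcv
        by (auto simp: S_cnt_snoc R_cnt_snoc is_snd_on_def is_rcv_on_def ch_def)
      have "ev_val (filter (is_snd_on ch) \<sigma> ! R_cnt \<tau> ch) = ev_val e"
        using spec[OF spec[OF wfiii, of ch], of "R_cnt \<tau> ch"] rcvnth[OF Rcv] by simp
      moreover have "filter (is_snd_on ch) \<sigma> ! R_cnt \<tau> ch = filter (is_snd_on ch) \<tau> ! R_cnt \<tau> ch"
        using filter_take_nth2[of "R_cnt \<tau> ch" "is_snd_on ch" k \<sigma>] lt by (simp add: S_cnt_def \<tau>_def)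
      ultimately show ?thesis using lt Inn as Rcv by (auto simp: Lstep_def Let_def ch_def[symmetric])
    qed
  next
    case sy: False
    then have sy: "is_sync cap ch" by (simp add: async_iff)
    show ?thesis
    proof (cases "ev_op e")
      case Snd
      then show ?thesis using Inone sy by (auto simp: Lstep_def Let_def ch_def[symmetric])
    next
      case Rcv
      have rc: "is_rcv_on ch (\<sigma>!k)" using Rcv by (simp add: is_rcv_on_def ch_def e_def)
      have wfr: "0 < k \<and> is_snd_on ch (\<sigma> ! (k - 1)) \<and> ev_thread (\<sigma> ! (k - 1)) \<noteq> ev_thread (\<sigma> ! k)"
        using wf sy k rc unfolding well_formed_def by blast
      define e' where "e' = \<sigma>!(k-1)"
      have ce: "ev_ch e' = ch" "ev_op e' = Snd" using wfr by (auto simp: e'_def is_snd_on_def)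
      have Ie: "I_of cap \<tau> = Some e'"
        unfolding \<tau>_def using I_of_take[of k \<sigma> cap] k wfr ce sy by (simp add: e'_def)
      define \<tau>' where "\<tau>' = take (k-1) \<sigma>"
      have kk: "k = Suc (k-1)" "k - 1 < length \<sigma>" using wfr k by auto
      have tt: "\<tau> = \<tau>' @ [e']" unfolding \<tau>_def \<tau>'_def e'_def
        using take_Suc_conv_app_nth[OF kk(2)] kk(1) by simp
      have P': "Pgood cap \<tau>'" using P tt by (simp add: \<tau>_def Pgood_snoc)
      have I': "I_of cap \<tau>' = None"
      proof (rule ccontr)
        assume "I_of cap \<tau>' \<noteq> None"
        then obtain x where "I_of cap \<tau>' = Some x" by auto
        from wf_after_sync[OF wf _ this[unfolded \<tau>'_def]] k wfr show False
          by (auto simp: is_rcv_on_def is_snd_on_def)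
      qed
      have eq': "S_cnt \<tau>' ch = R_cnt \<tau>' ch" using Inv[OF P'] sy I' by auto
      have sn': "is_snd_on ch e'" using wfr e'_def by simp
      have Req: "R_cnt \<tau> ch = length (filter (is_snd_on ch) \<tau>')"
        using eq' tt sn' by (simp add: R_cnt_snoc S_cnt_def is_snd_on_def is_rcv_on_def)
      have fsn: "filter (is_snd_on ch) \<tau> ! R_cnt \<tau> ch = e'" "R_cnt \<tau> ch < length (filter (is_snd_on ch) \<tau>)"
        using tt sn' Req by (auto simp: nth_append)
      have "ev_val (filter (is_snd_on ch) \<sigma> ! R_cnt \<tau> ch) = ev_val e"
        using spec[OF spec[OF wfiii, of ch], of "R_cnt \<tau> ch"] rcvnth[OF Rcv] by simp
      moreover have "filter (is_snd_on ch) \<sigma> ! R_cnt \<tau> ch = filter (is_snd_on ch) \<tau> ! R_cnt \<tau> ch"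
        using filter_take_nth2[of "R_cnt \<tau> ch" "is_snd_on ch" k \<sigma>] fsn by (simp add: \<tau>_def)
      ultimately have "ev_val e' = ev_val e" using fsn by simp
      moreover have "ev_thread e' \<noteq> ev_thread e" using wfr by (simp add: e_def e'_def)
      ultimately show ?thesis using sy Rcv Ie sn'
        by (auto simp: Lstep_def Let_def ch_def[symmetric])
    qed
  qed
  show ?case using P L te by (simp add: Pgood_snoc \<tau>_def)
qed

lemma WF_iff: "well_formed cap \<sigma> \<longleftrightarrow> Pgood cap \<sigma> \<and> I_of cap \<sigma> = None"
  using WF1 WF2_I WF2_P[of cap \<sigma> "length \<sigma>"] by auto

lemma cnt_snd_eq: "distinct \<tau> \<Longrightarrow> cnt_snd (set \<tau>) ch = S_cnt \<tau> ch"
proof -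
  assume d: "distinct \<tau>"
  have "{e\<in>set \<tau>. is_snd_on ch e} = set (filter (is_snd_on ch) \<tau>)" by auto
  moreover have "card (set (filter (is_snd_on ch) \<tau>)) = length (filter (is_snd_on ch) \<tau>)"
    by (rule distinct_card) (simp add: d)
  ultimately show ?thesis by (simp add: cnt_snd_def S_cnt_def)
qed

lemma cnt_rcv_eq: "distinct \<tau> \<Longrightarrow> cnt_rcv (set \<tau>) ch = R_cnt \<tau> ch"
proof -
  assume d: "distinct \<tau>"
  have "{e\<in>set \<tau>. is_rcv_on ch e} = set (filter (is_rcv_on ch) \<tau>)" by auto
  moreover have "card (set (filter (is_rcv_on ch) \<tau>)) = length (filter (is_rcv_on ch) \<tau>)"
    by (rule distinct_card) (simp add: d)
  ultimately show ?thesis by (simp add: cnt_rcv_def R_cnt_def)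
qed

definition precompat :: "(('i, 't, 'c, 'v) event \<times> ('i, 't, 'c, 'v) event) set \<Rightarrow> ('i,'t,'c,'v) event list \<Rightarrow> bool" where
  "precompat po \<tau> = (\<forall>i j. i < j \<and> j < length \<tau> \<longrightarrow> (\<tau>!j, \<tau>!i) \<notin> po)"

lemma precompat_split:
  assumes "precompat po \<tau>" "\<tau> = \<tau>1 @ x # \<tau>2" "y \<in> set \<tau>1"
  shows "(x, y) \<notin> po"
proof -
  obtain i where i: "i < length \<tau>1" "\<tau>1 ! i = y" using assms(3) by (auto simp: in_set_conv_nth)
  have "\<tau> ! i = y" "\<tau> ! length \<tau>1 = x" "length \<tau>1 < length \<tau>" using assms(2) i by (auto simp: nth_append)
  then show ?thesis using assms(1) i(1) unfolding precompat_def by blast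
qed

lemma among:
  assumes d: "distinct \<tau>" and pc: "precompat po \<tau>" and ir: "(e, e) \<notin> po"
    and e: "e \<in> set (drop R (filter (is_snd_on ch) \<tau>))"
  shows "card {f\<in>set \<tau>. is_snd_on ch f \<and> ev_thread f = ev_thread e \<and> (e, f) \<in> po}
           < length (drop R (filter (is_snd_on ch) \<tau>))"
proof -
  have eS: "e \<in> set \<tau>" "is_snd_on ch e" using e by (auto dest: in_set_dropD)
  obtain \<tau>1 \<tau>2 where sp: "\<tau> = \<tau>1 @ e # \<tau>2" using eS(1) by (meson split_list)
  define A where "A = filter (is_snd_on ch) \<tau>1"
  define B where "B = filter (is_snd_on ch) \<tau>2"
  have fl: "filter (is_snd_on ch) \<tau> = A @ e # B" using sp eS(2) by (simp add: A_def B_def)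
  have dl: "distinct (A @ e # B)" using d fl by (metis distinct_filter)
  have RA: "R \<le> length A"
  proof (rule ccontr)
    assume "\<not> R \<le> length A"
    then have "drop R (A @ e # B) = drop (R - length A - 1) B"
      by (simp add: drop_append) (metis Suc_diff_Suc drop_Suc_Cons not_le_imp_less)
    then have "e \<in> set B" using e fl by (metis in_set_dropD)
    then show False using dl by simp
  qed
  have sub: "{f\<in>set \<tau>. is_snd_on ch f \<and> ev_thread f = ev_thread e \<and> (e, f) \<in> po} \<subseteq> set B"
  proof
    fix f assume f: "f \<in> {f\<in>set \<tau>. is_snd_on ch f \<and> ev_thread f = ev_thread e \<and> (e, f) \<in> po}"
    then have "f \<notin> set \<tau>1" using precompat_split[OF pc sp] by blast
    moreover have "f \<noteq> e" using f ir by blast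
    ultimately show "f \<in> set B" using f sp by (auto simp: B_def)
  qed
  have "card {f\<in>set \<tau>. is_snd_on ch f \<and> ev_thread f = ev_thread e \<and> (e, f) \<in> po} \<le> length B"
    using card_mono[OF _ sub] card_length[of B] by fastforce
  also have "\<dots> < length (drop R (filter (is_snd_on ch) \<tau>))" using fl RA by simp
  finally show ?thesis .
qed

lemma node_ok:
  assumes ir: "irrefl po" and d: "distinct \<tau>" and sub: "set \<tau> \<subseteq> S"
    and dc: "\<forall>f\<in>set \<tau>. \<forall>e. (e, f) \<in> po \<longrightarrow> e \<in> set \<tau>"
    and pc: "precompat po \<tau>" and P: "Pgood cap \<tau>"
  shows "frontier_node S po cap (node_of cap \<tau>)"
proof -
  note inv = Inv[OF P]
  note cs = cnt_snd_eq[OF d] cnt_rcv_eq[OF d]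
  have A: "\<forall>ch. is_sync cap ch \<longrightarrow>
        cnt_rcv (set \<tau>) ch = cnt_snd (set \<tau>) ch \<or> cnt_rcv (set \<tau>) ch + 1 = cnt_snd (set \<tau>) ch"
    using inv by (auto simp: cs split: if_splits)
  have B: "\<forall>ch1 ch2. is_sync cap ch1 \<and> is_sync cap ch2 \<and>
        cnt_rcv (set \<tau>) ch1 + 1 = cnt_snd (set \<tau>) ch1 \<and> cnt_rcv (set \<tau>) ch2 + 1 = cnt_snd (set \<tau>) ch2 \<longrightarrow> ch1 = ch2"
  proof (intro allI impI)
    fix ch1 ch2 assume h: "is_sync cap ch1 \<and> is_sync cap ch2 \<and>
        cnt_rcv (set \<tau>) ch1 + 1 = cnt_snd (set \<tau>) ch1 \<and> cnt_rcv (set \<tau>) ch2 + 1 = cnt_snd (set \<tau>) ch2"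
    have 1: "\<exists>e'. I_of cap \<tau> = Some e' \<and> ev_ch e' = ch1"
      using inv[THEN conjunct2, rule_format, of ch1] h by (auto simp: cs split: if_splits)
    have 2: "\<exists>e'. I_of cap \<tau> = Some e' \<and> ev_ch e' = ch2"
      using inv[THEN conjunct2, rule_format, of ch2] h by (auto simp: cs split: if_splits)
    show "ch1 = ch2" using 1 2 by auto
  qed
  have C: "\<forall>ch. is_async cap ch \<longrightarrow>
        cnt_rcv (set \<tau>) ch \<le> cnt_snd (set \<tau>) ch \<and> cnt_snd (set \<tau>) ch \<le> cnt_rcv (set \<tau>) ch + cap ch"
    using inv by (auto simp: cs)
  have D: "\<forall>ch. is_sync cap ch \<longrightarrow> Q_of cap \<tau> ch = []" by (simp add: Q_of_def async_iff)
  have E: "\<forall>ch. is_async cap ch \<longrightarrow>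
        length (Q_of cap \<tau> ch) \<le> cap ch \<and>
        (\<forall>e\<in>set (Q_of cap \<tau> ch). among_last_sends po (set \<tau>) ch (length (Q_of cap \<tau> ch)) e)"
  proof (intro allI impI conjI ballI)
    fix ch assume as: "is_async cap ch"
    have "S_cnt \<tau> ch \<le> R_cnt \<tau> ch + cap ch" using inv as by blast
    then show "length (Q_of cap \<tau> ch) \<le> cap ch" using as by (simp add: Q_of_def S_cnt_def)
    fix e assume "e \<in> set (Q_of cap \<tau> ch)"
    then have e: "e \<in> set (drop (R_cnt \<tau> ch) (filter (is_snd_on ch) \<tau>))" using as by (simp add: Q_of_def)
    have "(e,e) \<notin> po" using ir by (simp add: irrefl_def)
    from among[OF d pc this e] e as show "among_last_sends po (set \<tau>) ch (length (Q_of cap \<tau> ch)) e"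
      by (auto simp: among_last_sends_def Q_of_def dest: in_set_dropD)
  qed
  have F: "(if (\<forall>ch. is_sync cap ch \<longrightarrow> cnt_rcv (set \<tau>) ch = cnt_snd (set \<tau>) ch)
      then I_of cap \<tau> = None
      else (\<exists>e ch. I_of cap \<tau> = Some e \<and> e \<in> S \<and> is_sync cap ch \<and> is_snd_on ch e
                  \<and> cnt_rcv (set \<tau>) ch + 1 = cnt_snd (set \<tau>) ch))"
  proof (cases "I_of cap \<tau>")
    case None
    then show ?thesis using inv by (auto simp: cs)
  next
    case (Some e')
    then have e': "\<tau> \<noteq> []" "e' = last \<tau>" "is_sync cap (ev_ch e')" "ev_op e' = Snd"
      by (auto simp: I_of_def split: if_splits)
    then have "e' \<in> S" using sub by auto
    moreover have "cnt_rcv (set \<tau>) (ev_ch e') + 1 = cnt_snd (set \<tau>) (ev_ch e')"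
      using inv e' Some by (auto simp: cs)
    ultimately show ?thesis using Some e' by (auto simp: is_snd_on_def)
  qed
  show ?thesis unfolding frontier_node_def node_of_def using sub dc A B C D E F
    by (simp only: prod.case)
qed

lemma Q_of_other: "ev_ch e \<noteq> ch \<Longrightarrow> Q_of cap (\<tau> @ [e]) ch = Q_of cap \<tau> ch"
  by (simp add: Q_of_def R_cnt_snoc is_rcv_on_def is_snd_on_def)

lemma Q_of_sync: "is_sync cap ch \<Longrightarrow> Q_of cap \<tau> ch = []"
  by (simp add: Q_of_def async_iff)

lemma Q_of_rcv: "is_async cap (ev_ch e) \<Longrightarrow> ev_op e = Rcv \<Longrightarrow>
   Q_of cap (\<tau> @ [e]) (ev_ch e) = drop (Suc (R_cnt \<tau> (ev_ch e))) (filter (is_snd_on (ev_ch e)) \<tau>)"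
  by (simp add: Q_of_def R_cnt_snoc is_rcv_on_def is_snd_on_def)

lemma Q_of_snd: "is_async cap (ev_ch e) \<Longrightarrow> ev_op e = Snd \<Longrightarrow>
   Q_of cap (\<tau> @ [e]) (ev_ch e) = drop (R_cnt \<tau> (ev_ch e)) (filter (is_snd_on (ev_ch e)) \<tau> @ [e])"
  by (simp add: Q_of_def R_cnt_snoc is_rcv_on_def is_snd_on_def)

lemma Q_of_tau: "is_async cap ch \<Longrightarrow> Q_of cap \<tau> ch = drop (R_cnt \<tau> ch) (filter (is_snd_on ch) \<tau>)"
  by (simp add: Q_of_def)

lemma edge_fwd:
  assumes n1: "frontier_node S po cap (node_of cap \<tau>)" and n2: "frontier_node S po cap (node_of cap (\<tau> @ [e]))"
    and eS: "e \<in> S" "e \<notin> set \<tau>" and P: "Pgood cap \<tau>" and L: "Lstep cap \<tau> e"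
  shows "frontier_edge S po cap (node_of cap \<tau>) (node_of cap (\<tau> @ [e]))"
proof -
  note inv = Inv[OF P]
  define ch where "ch = ev_ch e"
  define Ls where "Ls = filter (is_snd_on ch) \<tau>"
  have oth: "\<forall>ch'. is_async cap ch' \<and> ch' \<noteq> ch \<longrightarrow> Q_of cap (\<tau> @ [e]) ch' = Q_of cap \<tau> ch'"
    using Q_of_other ch_def by metis
  have core: "(is_async cap ch \<and> ev_op e = Rcv \<and> I_of cap \<tau> = None \<and> I_of cap (\<tau>@[e]) = None \<and>
             Q_of cap \<tau> ch \<noteq> [] \<and> ev_val (hd (Q_of cap \<tau> ch)) = ev_val e \<and>
             Q_of cap \<tau> ch = hd (Q_of cap \<tau> ch) # Q_of cap (\<tau>@[e]) ch \<and>
             (\<forall>ch'. is_async cap ch' \<and> ch' \<noteq> ch \<longrightarrow> Q_of cap (\<tau>@[e]) ch' = Q_of cap \<tau> ch')) \<or>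
          (is_async cap ch \<and> ev_op e = Snd \<and> I_of cap \<tau> = None \<and> I_of cap (\<tau>@[e]) = None \<and>
             length (Q_of cap \<tau> ch) < cap ch \<and> Q_of cap (\<tau>@[e]) ch = Q_of cap \<tau> ch @ [e] \<and>
             (\<forall>ch'. is_async cap ch' \<and> ch' \<noteq> ch \<longrightarrow> Q_of cap (\<tau>@[e]) ch' = Q_of cap \<tau> ch')) \<or>
          (is_sync cap ch \<and> ev_op e = Snd \<and> I_of cap \<tau> = None \<and> I_of cap (\<tau>@[e]) = Some e \<and> Q_of cap \<tau> = Q_of cap (\<tau>@[e])) \<or>
          (is_sync cap ch \<and> ev_op e = Rcv \<and>
             (\<exists>e'. I_of cap \<tau> = Some e' \<and> is_snd_on ch e' \<and> ev_val e' = ev_val e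
                    \<and> ev_thread e' \<noteq> ev_thread e) \<and>
             I_of cap (\<tau>@[e]) = None \<and> Q_of cap \<tau> = Q_of cap (\<tau>@[e]))"
  proof -
    have Qsame: "Q_of cap \<tau> = Q_of cap (\<tau>@[e])" if sy: "is_sync cap ch"
    proof
      fix ch' show "Q_of cap \<tau> ch' = Q_of cap (\<tau>@[e]) ch'"
        using sy Q_of_other[of e ch' cap \<tau>] by (cases "ch' = ch") (auto simp: Q_of_sync ch_def)
    qed
    from L[unfolded Lstep_def Let_def ch_def[symmetric]] show ?thesis
    proof (elim disjE conjE exE)
      assume as: "is_async cap ch" and r: "ev_op e = Rcv" "I_of cap \<tau> = None" "R_cnt \<tau> ch < S_cnt \<tau> ch"
        and v: "ev_val (filter (is_snd_on ch) \<tau> ! R_cnt \<tau> ch) = ev_val e"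
      have q1: "Q_of cap \<tau> ch = Ls ! R_cnt \<tau> ch # drop (Suc (R_cnt \<tau> ch)) Ls"
        using as r(3) by (simp add: Q_of_tau Ls_def S_cnt_def Cons_nth_drop_Suc)
      have q2: "Q_of cap (\<tau>@[e]) ch = drop (Suc (R_cnt \<tau> ch)) Ls"
        using Q_of_rcv[of cap e \<tau>] as r by (simp add: ch_def Ls_def)
      show ?thesis using q1 q2 v as r oth by (simp add: I_of_snoc Ls_def)
    next
      assume as: "is_async cap ch" and r: "ev_op e = Snd" "I_of cap \<tau> = None" "S_cnt \<tau> ch < R_cnt \<tau> ch + cap ch"
      have le: "R_cnt \<tau> ch \<le> length Ls" using inv as by (simp add: Ls_def S_cnt_def)
      have q2: "Q_of cap (\<tau>@[e]) ch = Q_of cap \<tau> ch @ [e]"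
        using Q_of_snd[of cap e \<tau>] as r le by (simp add: ch_def Ls_def Q_of_tau)
      have "length (Q_of cap \<tau> ch) < cap ch" using as r le by (simp add: Q_of_tau Ls_def S_cnt_def)
      then show ?thesis using q2 as r oth by (simp add: I_of_snoc ch_def[symmetric] async_iff)
    next
      assume sy: "is_sync cap ch" and r: "ev_op e = Snd" "I_of cap \<tau> = None"
      show ?thesis using Qsame[OF sy] sy r by (simp add: I_of_snoc ch_def)
    next
      fix e' assume sy: "is_sync cap ch" and r: "ev_op e = Rcv" "I_of cap \<tau> = Some e'" "is_snd_on ch e'"
        "ev_val e' = ev_val e" "ev_thread e' \<noteq> ev_thread e"
      show ?thesis using Qsame[OF sy] sy r by (auto simp: I_of_snoc ch_def)
    qed
  qed
  show ?thesis
    unfolding frontier_edge_def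
    using n1 n2 eS core unfolding node_of_def by (auto simp: Let_def ch_def)
qed

lemma edge_bwd:
  assumes E: "frontier_edge S po cap (node_of cap \<tau>) (Y2, Q2, I2)" and P: "Pgood cap \<tau>"
  shows "\<exists>e. e \<in> S \<and> e \<notin> set \<tau> \<and> (Y2, Q2, I2) = node_of cap (\<tau> @ [e]) \<and> Lstep cap \<tau> e"
proof -
  note inv = Inv[OF P]
  have n2: "frontier_node S po cap (Y2, Q2, I2)" using E by (simp add: frontier_edge_def)
  then have Qs: "\<forall>ch. is_sync cap ch \<longrightarrow> Q2 ch = []" by (simp add: frontier_node_def)
  obtain e where eS: "e \<in> S" "e \<notin> set \<tau>" and Y: "Y2 = insert e (set \<tau>)" and
    D: "let ch = ev_ch e in
          (is_async cap ch \<and> ev_op e = Rcv \<and> I_of cap \<tau> = None \<and> I2 = None \<and>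
             Q_of cap \<tau> ch \<noteq> [] \<and> ev_val (hd (Q_of cap \<tau> ch)) = ev_val e \<and> Q_of cap \<tau> ch = hd (Q_of cap \<tau> ch) # Q2 ch \<and>
             (\<forall>ch'. is_async cap ch' \<and> ch' \<noteq> ch \<longrightarrow> Q2 ch' = Q_of cap \<tau> ch')) \<or>
          (is_async cap ch \<and> ev_op e = Snd \<and> I_of cap \<tau> = None \<and> I2 = None \<and>
             length (Q_of cap \<tau> ch) < cap ch \<and> Q2 ch = Q_of cap \<tau> ch @ [e] \<and>
             (\<forall>ch'. is_async cap ch' \<and> ch' \<noteq> ch \<longrightarrow> Q2 ch' = Q_of cap \<tau> ch')) \<or>
          (is_sync cap ch \<and> ev_op e = Snd \<and> I_of cap \<tau> = None \<and> I2 = Some e \<and> Q_of cap \<tau> = Q2) \<or>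
          (is_sync cap ch \<and> ev_op e = Rcv \<and>
             (\<exists>e'. I_of cap \<tau> = Some e' \<and> is_snd_on ch e' \<and> ev_val e' = ev_val e
                    \<and> ev_thread e' \<noteq> ev_thread e) \<and>
             I2 = None \<and> Q_of cap \<tau> = Q2)"
    using E unfolding frontier_edge_def node_of_def by auto
  define ch where "ch = ev_ch e"
  define Ls where "Ls = filter (is_snd_on ch) \<tau>"
  have QY: "Q2 = Q_of cap (\<tau>@[e]) \<and> I2 = I_of cap (\<tau>@[e]) \<and> Lstep cap \<tau> e"
    using D[unfolded Let_def ch_def[symmetric]]
  proof (elim disjE conjE exE)
    assume as: "is_async cap ch" and r: "ev_op e = Rcv" "I_of cap \<tau> = None" "I2 = None"
      "Q_of cap \<tau> ch \<noteq> []" "ev_val (hd (Q_of cap \<tau> ch)) = ev_val e" "Q_of cap \<tau> ch = hd (Q_of cap \<tau> ch) # Q2 ch"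
      and o: "\<forall>ch'. is_async cap ch' \<and> ch' \<noteq> ch \<longrightarrow> Q2 ch' = Q_of cap \<tau> ch'"
    have lt: "R_cnt \<tau> ch < length Ls" using r(4) as by (simp add: Q_of_tau Ls_def)
    have q1: "Q_of cap \<tau> ch = Ls ! R_cnt \<tau> ch # drop (Suc (R_cnt \<tau> ch)) Ls"
      using as lt by (simp add: Q_of_tau Ls_def Cons_nth_drop_Suc)
    have q2: "Q_of cap (\<tau>@[e]) ch = drop (Suc (R_cnt \<tau> ch)) Ls"
      using Q_of_rcv[of cap e \<tau>] as r by (simp add: ch_def Ls_def)
    have QQ: "Q2 = Q_of cap (\<tau>@[e])"
    proof
      fix c show "Q2 c = Q_of cap (\<tau>@[e]) c"
      proof (cases "c = ch")
        case True then show ?thesis using q1 q2 r(6) by simp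
      next
        case False then show ?thesis using o Qs Q_of_other[of e c cap \<tau>]
          by (cases "is_async cap c") (auto simp: ch_def async_iff Q_of_sync)
      qed
    qed
    have "Lstep cap \<tau> e" using as r lt q1
      by (simp add: Lstep_def Let_def ch_def[symmetric] S_cnt_def Ls_def)
    then show ?thesis using QQ r by (simp add: I_of_snoc)
  next
    assume as: "is_async cap ch" and r: "ev_op e = Snd" "I_of cap \<tau> = None" "I2 = None"
      "length (Q_of cap \<tau> ch) < cap ch" "Q2 ch = Q_of cap \<tau> ch @ [e]"
      and o: "\<forall>ch'. is_async cap ch' \<and> ch' \<noteq> ch \<longrightarrow> Q2 ch' = Q_of cap \<tau> ch'"
    have le: "R_cnt \<tau> ch \<le> length Ls" using inv as by (simp add: Ls_def S_cnt_def)
    have q2: "Q_of cap (\<tau>@[e]) ch = Q_of cap \<tau> ch @ [e]"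
      using Q_of_snd[of cap e \<tau>] as r le by (simp add: ch_def Ls_def Q_of_tau)
    have QQ: "Q2 = Q_of cap (\<tau>@[e])"
    proof
      fix c show "Q2 c = Q_of cap (\<tau>@[e]) c"
      proof (cases "c = ch")
        case True then show ?thesis using q2 r(5) by simp
      next
        case False then show ?thesis using o Qs Q_of_other[of e c cap \<tau>]
          by (cases "is_async cap c") (auto simp: ch_def async_iff Q_of_sync)
      qed
    qed
    have "S_cnt \<tau> ch < R_cnt \<tau> ch + cap ch" using r(4) as le by (simp add: Q_of_tau Ls_def S_cnt_def)
    then have "Lstep cap \<tau> e" using as r by (simp add: Lstep_def Let_def ch_def[symmetric])
    then show ?thesis using QQ r as by (simp add: I_of_snoc ch_def[symmetric] async_iff)
  next
    assume sy: "is_sync cap ch" and r: "ev_op e = Snd" "I_of cap \<tau> = None" "I2 = Some e" "Q_of cap \<tau> = Q2"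
    have QQ: "Q2 = Q_of cap (\<tau>@[e])"
    proof
      fix c show "Q2 c = Q_of cap (\<tau>@[e]) c"
        using sy r(4) Q_of_other[of e c cap \<tau>] by (cases "c = ch") (auto simp: Q_of_sync ch_def)
    qed
    have "Lstep cap \<tau> e" using sy r by (simp add: Lstep_def Let_def ch_def[symmetric])
    then show ?thesis using QQ r sy by (simp add: I_of_snoc ch_def[symmetric])
  next
    fix e' assume sy: "is_sync cap ch" and r: "ev_op e = Rcv" "I_of cap \<tau> = Some e'" "is_snd_on ch e'"
        "ev_val e' = ev_val e" "ev_thread e' \<noteq> ev_thread e" "I2 = None" "Q_of cap \<tau> = Q2"
    have QQ: "Q2 = Q_of cap (\<tau>@[e])"
    proof
      fix c show "Q2 c = Q_of cap (\<tau>@[e]) c"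
        using sy r(7) Q_of_other[of e c cap \<tau>] by (cases "c = ch") (auto simp: Q_of_sync ch_def)
    qed
    have "Lstep cap \<tau> e" using sy r by (auto simp: Lstep_def Let_def ch_def[symmetric])
    then show ?thesis using QQ r sy by (simp add: I_of_snoc ch_def[symmetric])
  qed
  show ?thesis using eS Y QY by (auto simp: node_of_def)
qed

lemma node_of_Nil: "node_of cap [] = frontier_source"
  by (auto simp: node_of_def frontier_source_def Q_of_def I_of_def)

lemma po_of_facts:
  assumes d: "distinct \<sigma>"
  shows "\<forall>f\<in>set (take k \<sigma>). \<forall>e. (e, f) \<in> po_of \<sigma> \<longrightarrow> e \<in> set (take k \<sigma>)"
    and "precompat (po_of \<sigma>) (take k \<sigma>)"
proof -
  show "\<forall>f\<in>set (take k \<sigma>). \<forall>e. (e, f) \<in> po_of \<sigma> \<longrightarrow> e \<in> set (take k \<sigma>)"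
  proof (intro ballI allI impI)
    fix f e assume f: "f \<in> set (take k \<sigma>)" and ef: "(e, f) \<in> po_of \<sigma>"
    obtain i j where ij: "e = \<sigma>!i" "f = \<sigma>!j" "i < j" "j < length \<sigma>" using ef by (auto simp: po_of_def)
    obtain j' where j': "j' < length (take k \<sigma>)" "take k \<sigma> ! j' = f" using f by (auto simp: in_set_conv_nth)
    then have "\<sigma> ! j' = f" "j' < k" "j' < length \<sigma>" by auto
    then have "j' = j" using nth_eq_iff_index_eq[OF d \<open>j' < length \<sigma>\<close> ij(4)] ij(2) by simp
    then have il: "i < length (take k \<sigma>)" "i < k" using ij j' by auto
    have "take k \<sigma> ! i = e" using il ij by simp
    then show "e \<in> set (take k \<sigma>)" using nth_mem[OF il(1)] by simp
  qed
  show "precompat (po_of \<sigma>) (take k \<sigma>)"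
    unfolding precompat_def
  proof (intro allI impI notI)
    fix i j assume ij: "i < j \<and> j < length (take k \<sigma>)" and p: "(take k \<sigma> ! j, take k \<sigma> ! i) \<in> po_of \<sigma>"
    obtain a b where ab: "\<sigma>!a = take k \<sigma> ! j" "\<sigma>!b = take k \<sigma> ! i" "a < b" "b < length \<sigma>"
      using p by (auto simp: po_of_def)
    have h: "take k \<sigma> ! j = \<sigma> ! j" "take k \<sigma> ! i = \<sigma> ! i" "j < length \<sigma>" "i < length \<sigma>" using ij by auto
    have "a < length \<sigma>" using ab by simp
    then have "a = j" "b = i" using nth_eq_iff_index_eq[OF d \<open>a < length \<sigma>\<close> h(3)]
      nth_eq_iff_index_eq[OF d ab(4) h(4)] ab h by simp_all
    then show False using ab ij by simp
  qed
qed

theorem mainTheorem9: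
  fixes S :: "('i, 't, 'c, 'v) event set"
    and po :: "(('i, 't, 'c, 'v) event \<times> ('i, 't, 'c, 'v) event) set"
    and cap :: "'c \<Rightarrow> nat"
  assumes "abstract_execution S po"
  shows "consistent S po cap \<longleftrightarrow>
         (\<exists>N. frontier_sink S po cap N \<and> (frontier_edge S po cap)\<^sup>*\<^sup>* frontier_source N)"
proof
  have ir: "irrefl po" using assms by (simp add: abstract_execution_def)
  assume "consistent S po cap"
  then obtain \<sigma> where d: "distinct \<sigma>" and sS: "set \<sigma> = S" and po: "po_of \<sigma> = po" and wf: "well_formed cap \<sigma>"
    by (auto simp: consistent_def concretizes_def)
  have P: "Pgood cap \<sigma>" and I: "I_of cap \<sigma> = None" using wf WF_iff by auto
  have nd: "frontier_node S po cap (node_of cap (take k \<sigma>))" for k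
  proof (rule node_ok[OF ir distinct_take[OF d]])
    show "set (take k \<sigma>) \<subseteq> S" using sS by (metis set_take_subset)
    show "\<forall>f\<in>set (take k \<sigma>). \<forall>e. (e, f) \<in> po \<longrightarrow> e \<in> set (take k \<sigma>)"
      "precompat po (take k \<sigma>)" using po_of_facts[OF d, of k] po by auto
    show "Pgood cap (take k \<sigma>)" using Pgood_take[OF P] .
  qed
  have reach: "k \<le> length \<sigma> \<Longrightarrow> (frontier_edge S po cap)\<^sup>*\<^sup>* frontier_source (node_of cap (take k \<sigma>))" for k
  proof (induction k)
    case 0 then show ?case by (simp add: node_of_Nil)
  next
    case (Suc k)
    then have k: "k < length \<sigma>" by simp
    have t: "take (Suc k) \<sigma> = take k \<sigma> @ [\<sigma>!k]" using k by (simp add: take_Suc_conv_app_nth)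
    have ne: "\<sigma>!k \<notin> set (take k \<sigma>)" using distinct_take[OF d, of "Suc k"] t by simp
    have eS: "\<sigma>!k \<in> S" using k sS by auto
    have L: "Lstep cap (take k \<sigma>) (\<sigma>!k)" using P k by (simp add: Pgood_def)
    have "frontier_edge S po cap (node_of cap (take k \<sigma>)) (node_of cap (take (Suc k) \<sigma>))"
      using edge_fwd[OF nd[of k] nd[of "Suc k", unfolded t] eS ne Pgood_take[OF P] L] t by simp
    then show ?case using Suc k by (meson Suc_leD rtranclp.rtrancl_into_rtrancl)
  qed
  have "frontier_sink S po cap (node_of cap \<sigma>)"
    using nd[of "length \<sigma>"] sS I by (simp add: frontier_sink_def node_of_def)
  moreover have "(frontier_edge S po cap)\<^sup>*\<^sup>* frontier_source (node_of cap \<sigma>)"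
    using reach[of "length \<sigma>"] by simp
  ultimately show "\<exists>N. frontier_sink S po cap N \<and> (frontier_edge S po cap)\<^sup>*\<^sup>* frontier_source N"
    by blast
next
  have ae: "finite S" "irrefl po" "trans po" "po \<subseteq> S \<times> S"
    "\<forall>e\<in>S. \<forall>f\<in>S. ev_thread e = ev_thread f \<and> e \<noteq> f \<longrightarrow> (e, f) \<in> po \<or> (f, e) \<in> po"
    "\<forall>(e, f)\<in>po. ev_thread e = ev_thread f"
    using assms unfolding abstract_execution_def by blast+
  assume "\<exists>N. frontier_sink S po cap N \<and> (frontier_edge S po cap)\<^sup>*\<^sup>* frontier_source N"
  then obtain N where sk: "frontier_sink S po cap N" and rc: "(frontier_edge S po cap)\<^sup>*\<^sup>* frontier_source N"
    by blast
  have inv: "\<exists>\<tau>. N = node_of cap \<tau> \<and> distinct \<tau> \<and> set \<tau> \<subseteq> S \<and> precompat po \<tau> \<and> Pgood cap \<tau>"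
    using rc
  proof (induction rule: rtranclp_induct)
    case base
    then show ?case by (rule exI[of _ "[]"]) (simp add: node_of_Nil precompat_def)
  next
    case (step N1 N2)
    then obtain \<tau> where t: "N1 = node_of cap \<tau>" "distinct \<tau>" "set \<tau> \<subseteq> S" "precompat po \<tau>" "Pgood cap \<tau>"
      by blast
    obtain Y2 Q2 I2 where n2: "N2 = (Y2, Q2, I2)" by (cases N2)
    obtain e where e: "e \<in> S" "e \<notin> set \<tau>" "N2 = node_of cap (\<tau> @ [e])" "Lstep cap \<tau> e"
      using edge_bwd[of S po cap \<tau> Y2 Q2 I2] step.hyps(2) t n2 by auto
    have n1: "frontier_node S po cap (node_of cap \<tau>)" using step.hyps(2) t by (simp add: frontier_edge_def)
    then have dc: "\<forall>f\<in>set \<tau>. \<forall>x. (x, f) \<in> po \<longrightarrow> x \<in> set \<tau>"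
      by (simp add: frontier_node_def node_of_def)
    have pc: "precompat po (\<tau> @ [e])"
      unfolding precompat_def
    proof (intro allI impI)
      fix i j assume ij: "i < j \<and> j < length (\<tau> @ [e])"
      show "((\<tau> @ [e]) ! j, (\<tau> @ [e]) ! i) \<notin> po"
      proof (cases "j < length \<tau>")
        case True
        then show ?thesis using t(4) ij by (simp add: precompat_def nth_append)
      next
        case False
        then have "j = length \<tau>" "i < length \<tau>" using ij by auto
        then show ?thesis using dc e(2) by (simp add: nth_append) (meson nth_mem)
      qed
    qed
    show ?case using e t pc by (intro exI[of _ "\<tau> @ [e]"]) (simp add: Pgood_snoc)
  qed
  then obtain \<tau> where t: "N = node_of cap \<tau>" "distinct \<tau>" "set \<tau> \<subseteq> S" "precompat po \<tau>" "Pgood cap \<tau>"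
    by blast
  have sS: "set \<tau> = S" and I: "I_of cap \<tau> = None" using sk t by (auto simp: frontier_sink_def node_of_def)
  have wf: "well_formed cap \<tau>" using WF_iff t I by blast
  have "po_of \<tau> = po"
  proof
    show "po_of \<tau> \<subseteq> po"
    proof
      fix p assume "p \<in> po_of \<tau>"
      then obtain i j where p: "p = (\<tau>!i, \<tau>!j)" "i < j" "j < length \<tau>" "ev_thread (\<tau>!i) = ev_thread (\<tau>!j)"
        by (auto simp: po_of_def)
      have "\<tau>!i \<noteq> \<tau>!j" using t(2) p by (simp add: nth_eq_iff_index_eq)
      moreover have "\<tau>!i \<in> S" "\<tau>!j \<in> S" using sS p by auto
      moreover have "(\<tau>!j, \<tau>!i) \<notin> po" using t(4) p by (simp add: precompat_def)
      ultimately show "p \<in> po" using ae(5) p by blast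
    qed
  next
    show "po \<subseteq> po_of \<tau>"
    proof
      fix p assume pp: "p \<in> po"
      then obtain x y where xy: "p = (x, y)" "x \<in> S" "y \<in> S" "ev_thread x = ev_thread y" using ae(4) ae(6) by blast
      obtain i where i: "i < length \<tau>" "\<tau>!i = x" using xy sS by (metis in_set_conv_nth)
      obtain j where j: "j < length \<tau>" "\<tau>!j = y" using xy sS by (metis in_set_conv_nth)
      have "x \<noteq> y" using ae(2) pp xy by (auto simp: irrefl_def)
      then have "i \<noteq> j" using i j by auto
      moreover have "\<not> j < i" using t(4) pp xy i j by (auto simp: precompat_def)
      ultimately have "i < j" by simp
      then show "p \<in> po_of \<tau>" using i j xy unfolding po_of_def by blast
    qed
  qed
  then show "consistent S po cap" using t sS wf by (auto simp: consistent_def concretizes_def)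
qed

end
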